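(* Let $\Gamma$ be a flower graph and $\Gamma'$ a mandarin graph, both with $N$ edges $e_1,\dots,e_N$. Then $\mathcal{T}_{\mathrm{sym}}(\Gamma)=\mathcal{T}_{\mathrm{s}}(\Gamma')$. In particular, $P_{\Gamma,\mathrm{sym}}=c\,P_{M,\mathrm{s}}$ for some constant $c$.
   Context: A flower graph has one vertex and $N$ loops; a mandarin graph has two vertices and $N$ edges each joining them; edges are oriented and indexed $e_1,\dots,e_N$ in both, and $\deg(v)$ counts edge-ends. For a metric graph $(\Gamma,\boldsymbol{\ell})$ with $e_j\cong[0,\ell_j]$ and the Laplacian $-d^2/dt^2$ under standard vertex conditions (continuity, zero sum of outgoing derivatives), an eigenpair $(k^2,f)$ with $k>0$ has $f|_{e_j}(t)=A_j\cos(kt)+B_j\sin(kt)=C_j\cos(k(\ell_j-t))+D_j\sin(k(\ell_j-t))$, $\mathrm{tr}_k(f)$ the vector of all $(A_j,B_j,C_j,D_j)$ (for $k=0$, constant $c$: $A_j=C_j=c$, $B_j=D_j=0$). $\mathcal{T}(\Gamma)=\{(\exp(ik\boldsymbol{\ell}),\mathrm{tr}_k(f))\}\subset\mathbb{T}^N\times\mathbb{C}^{4N}$ over all $\boldsymbol{\ell}\in\mathbb{R}_+^N$, eigenvalues, and $f$ in eigenspaces (including $0$), with $\exp(ik\boldsymbol{\ell})=(e^{ik\ell_j})_j$; $\mathcal{T}_{\mathbf{z}}(\Gamma)$ the fiber over $\mathbf{z}$. $P_\Gamma(\mathbf{z})=\det(I_{2N}-\mathrm{diag}(z_1..z_N,z_1..z_N)S)$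 with $S$ the real matrix on $(a_1..a_N,b_1..b_N)$: $(S\mathbf{a})_j=\frac{2}{\deg(o(e_j))}(\sum_{o(e_i)=o(e_j)}b_i+\sum_{\tau(e_i)=o(e_j)}a_i)-b_j$, $(S\mathbf{a})_{N+j}=\frac{2}{\deg(\tau(e_j))}(\sum_{o(e_i)=\tau(e_j)}b_i+\sum_{\tau(e_i)=\tau(e_j)}a_i)-a_j$. For the flower, $P_\Gamma=P_{\Gamma,\mathrm{sym}}\prod_{j=1}^N(1-z_j)$ defines $P_{\Gamma,\mathrm{sym}}$, and $\mathcal{T}_{\mathrm{sym}}(\Gamma)=\{(\mathbf{z},\mathbf{x})\in\mathcal{T}(\Gamma):P_{\Gamma,\mathrm{sym}}(\mathbf{z})=0,\ (A_j,B_j)=(C_j,D_j)\ \forall j\}$. For the mandarin, $P_{M,\mathrm{s}}(\mathbf{z})=\sum_{j=1}^N(z_j-1)\prod_{i\ne j}(z_i+1)$ and $\mathcal{T}_{\mathrm{s}}(\Gamma')=\{(\mathbf{z},\mathbf{x})\in\mathcal{T}(\Gamma'):P_{M,\mathrm{s}}(\mathbf{z})=0,\ (A_j,B_j)=(C_j,D_j)\ \forall j\}$. *)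

theory Defs
  imports Complex_Main "Jordan_Normal_Form.Determinant"
begin

text \<open>Edges are indexed 0..N-1 (e_{j+1} in the paper is index j). A graph is given by
 the origin map orig and terminus map term on edge indices. Vectors in C^N are
 functions nat => complex, normalised to 0 outside indices < N.\<close>

definition restr :: "nat \<Rightarrow> (nat \<Rightarrow> 'a::zero) \<Rightarrow> nat \<Rightarrow> 'a" where
  "restr N f = (\<lambda>j. if j < N then f j else 0)"

definition flower_o :: "nat \<Rightarrow> nat" where "flower_o = (\<lambda>_. 0)"
definition flower_t :: "nat \<Rightarrow> nat" where "flower_t = (\<lambda>_. 0)"
definition mandarin_o :: "nat \<Rightarrow> nat" where "mandarin_o = (\<lambda>_. 0)"
definition mandarin_t :: "nat \<Rightarrow> nat" where "mandarin_t = (\<lambda>_. 1)"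

definition deg :: "nat \<Rightarrow> (nat \<Rightarrow> nat) \<Rightarrow> (nat \<Rightarrow> nat) \<Rightarrow> nat \<Rightarrow> nat" where
  "deg N orig term v = card {j. j < N \<and> orig j = v} + card {j. j < N \<and> term j = v}"

text \<open>Coefficients C_j, D_j of f on e_j = [0,l_j] in the representation
  f(t) = C_j cos(k(l_j - t)) + D_j sin(k(l_j - t)), given f(t) = A_j cos(kt) + B_j sin(kt).\<close>
definition coefC :: "(nat \<Rightarrow> real) \<Rightarrow> real \<Rightarrow> (nat \<Rightarrow> complex) \<Rightarrow> (nat \<Rightarrow> complex) \<Rightarrow> nat \<Rightarrow> complex" where
  "coefC l k A B j = A j * complex_of_real (cos (k * l j)) + B j * complex_of_real (sin (k * l j))"
definition coefD :: "(nat \<Rightarrow> real) \<Rightarrow> real \<Rightarrow> (nat \<Rightarrow> complex) \<Rightarrow> (nat \<Rightarrow> complex) \<Rightarrow> nat \<Rightarrow> complex" where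
  "coefD l k A B j = A j * complex_of_real (sin (k * l j)) - B j * complex_of_real (cos (k * l j))"

text \<open>Standard vertex conditions for f|e_j(t) = A_j cos(kt) + B_j sin(kt), k > 0:
  continuity (value f_j(0) = A_j at the origin, f_j(l_j) at the terminus) and zero sum
  of outgoing derivatives (f_j'(0) = k B_j at the origin, -f_j'(l_j) at the terminus).\<close>
definition std_cond :: "nat \<Rightarrow> (nat \<Rightarrow> nat) \<Rightarrow> (nat \<Rightarrow> nat) \<Rightarrow> (nat \<Rightarrow> real) \<Rightarrow> real
    \<Rightarrow> (nat \<Rightarrow> complex) \<Rightarrow> (nat \<Rightarrow> complex) \<Rightarrow> bool" where
  "std_cond N orig term l k A B \<longleftrightarrow>
     (\<exists>F :: nat \<Rightarrow> complex. \<forall>j<N.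
         A j = F (orig j) \<and>
         A j * complex_of_real (cos (k * l j)) + B j * complex_of_real (sin (k * l j)) = F (term j))
   \<and> (\<forall>v. (\<Sum>j | j < N \<and> orig j = v. complex_of_real k * B j)
         + (\<Sum>j | j < N \<and> term j = v.
              - (complex_of_real k * (- A j * complex_of_real (sin (k * l j))
                                      + B j * complex_of_real (cos (k * l j))))) = 0)"

type_synonym trace = "(nat \<Rightarrow> complex) \<times> (nat \<Rightarrow> complex) \<times> (nat \<Rightarrow> complex) \<times> (nat \<Rightarrow> complex)"

definition tr :: "nat \<Rightarrow> (nat \<Rightarrow> real) \<Rightarrow> real \<Rightarrow> (nat \<Rightarrow> complex) \<Rightarrow> (nat \<Rightarrow> complex) \<Rightarrow> trace" where
  "tr N l k A B = (restr N A, restr N B, restr N (coefC l k A B), restr N (coefD l k A B))"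

text \<open>The set T(Gamma): eigenvalues k^2 with k > 0 (there is a nonzero eigenfunction),
  all f in the eigenspace (including 0); and eigenvalue 0 with constant eigenfunctions.\<close>
definition Tset :: "nat \<Rightarrow> (nat \<Rightarrow> nat) \<Rightarrow> (nat \<Rightarrow> nat) \<Rightarrow> ((nat \<Rightarrow> complex) \<times> trace) set" where
  "Tset N orig term =
    {(restr N (\<lambda>j. exp (\<i> * complex_of_real (k * l j))), tr N l k A B) | l k A B.
        (\<forall>j<N. l j > 0) \<and> k > 0
      \<and> (\<exists>A' B'. std_cond N orig term l k A' B' \<and> (\<exists>j<N. A' j \<noteq> 0 \<or> B' j \<noteq> 0))
      \<and> std_cond N orig term l k A B}
   \<union> {(restr N (\<lambda>j. exp (\<i> * complex_of_real (0 * l j))),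
        (restr N (\<lambda>_. c), restr N (\<lambda>_. 0), restr N (\<lambda>_. c), restr N (\<lambda>_. 0))) | l c.
        (\<forall>j<N. l j > 0)}"

text \<open>The matrix S on (a_1..a_N, b_1..b_N) (row/column r < N is a_{r}, r >= N is b_{r-N}).\<close>
definition S_entry :: "nat \<Rightarrow> (nat \<Rightarrow> nat) \<Rightarrow> (nat \<Rightarrow> nat) \<Rightarrow> nat \<Rightarrow> nat \<Rightarrow> real" where
  "S_entry N orig term r c =
    (let j = (if r < N then r else r - N);
         v = (if r < N then orig j else term j);
         d = real (deg N orig term v);
         i = (if c < N then c else c - N)
     in (if c < N then 2 / d * (if term i = v then 1 else 0)
                  else 2 / d * (if orig i = v then 1 else 0))
        - (if i = j \<and> ((r < N) = (N \<le> c)) then 1 else 0))"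

definition S_mat :: "nat \<Rightarrow> (nat \<Rightarrow> nat) \<Rightarrow> (nat \<Rightarrow> nat) \<Rightarrow> real mat" where
  "S_mat N orig term = mat (2 * N) (2 * N) (\<lambda>(r, c). S_entry N orig term r c)"

definition Z_mat :: "nat \<Rightarrow> (nat \<Rightarrow> complex) \<Rightarrow> complex mat" where
  "Z_mat N z = mat (2 * N) (2 * N) (\<lambda>(r, c). if r = c then z (if r < N then r else r - N) else 0)"

definition P_graph :: "nat \<Rightarrow> (nat \<Rightarrow> nat) \<Rightarrow> (nat \<Rightarrow> nat) \<Rightarrow> (nat \<Rightarrow> complex) \<Rightarrow> complex" where
  "P_graph N orig term z =
     det (1\<^sub>m (2 * N) - Z_mat N z * map_mat complex_of_real (S_mat N orig term))"

definition poly_fun :: "nat \<Rightarrow> ((nat \<Rightarrow> complex) \<Rightarrow> complex) \<Rightarrow> bool" where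
  "poly_fun N Q \<longleftrightarrow> (\<exists>(M :: (nat \<Rightarrow> nat) set) (a :: (nat \<Rightarrow> nat) \<Rightarrow> complex). finite M \<and>
      (\<forall>z. Q z = (\<Sum>\<alpha>\<in>M. a \<alpha> * (\<Prod>j<N. z j ^ \<alpha> j))))"

definition P_flower_sym :: "nat \<Rightarrow> (nat \<Rightarrow> complex) \<Rightarrow> complex" where
  "P_flower_sym N = (THE Q. poly_fun N Q \<and>
      (\<forall>z. P_graph N flower_o flower_t z = Q z * (\<Prod>j<N. 1 - z j)))"

definition P_mandarin_s :: "nat \<Rightarrow> (nat \<Rightarrow> complex) \<Rightarrow> complex" where
  "P_mandarin_s N z = (\<Sum>j<N. (z j - 1) * (\<Prod>i\<in>{..<N} - {j}. z i + 1))"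

definition T_flower_sym :: "nat \<Rightarrow> ((nat \<Rightarrow> complex) \<times> trace) set" where
  "T_flower_sym N = {(z, A, B, C, D). (z, A, B, C, D) \<in> Tset N flower_o flower_t
      \<and> P_flower_sym N z = 0 \<and> A = C \<and> B = D}"

definition T_mandarin_s :: "nat \<Rightarrow> ((nat \<Rightarrow> complex) \<times> trace) set" where
  "T_mandarin_s N = {(z, A, B, C, D). (z, A, B, C, D) \<in> Tset N mandarin_o mandarin_t
      \<and> P_mandarin_s N z = 0 \<and> A = C \<and> B = D}"

end

theory Submission
  imports Defs "HOL-Analysis.Elementary_Metric_Spaces"
begin

lemma cont_zero:
  fixes f :: "complex \<Rightarrow> complex"
  assumes c: "continuous_on UNIV f" and F: "finite F" and z: "\<And>t. t \<notin> F \<Longrightarrow> f t = 0"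
  shows "f 0 = 0"
proof -
  obtain d where d: "d > 0" "\<forall>x\<in>F. x \<noteq> 0 \<longrightarrow> d \<le> dist 0 x"
    using finite_set_avoid[OF F, of 0] by auto
  have "isCont f 0" using continuous_on_interior[OF c] by simp
  hence lim: "(f \<longlongrightarrow> f 0) (at 0)" by (simp add: isCont_def)
  have "\<forall>x. x \<noteq> 0 \<and> dist x 0 < d \<longrightarrow> f x = 0" using d z by (metis dist_commute not_le)
  then have ev: "eventually (\<lambda>t. f t = 0) (at 0)"
    unfolding eventually_at using d(1) by blast
  have "(f \<longlongrightarrow> 0) (at 0)" using ev by (rule tendsto_eventually)
  from tendsto_unique[OF _ lim this] show ?thesis by simp
qed

lemma det_cont:
  fixes E :: "complex \<Rightarrow> nat \<Rightarrow> nat \<Rightarrow> complex"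
  assumes "\<And>i j. i < n \<Longrightarrow> j < n \<Longrightarrow> continuous_on UNIV (\<lambda>t. E t i j)"
  shows "continuous_on UNIV (\<lambda>t. det (mat n n (\<lambda>(i,j). E t i j)))"
proof -
  have eq: "(\<lambda>t. det (mat n n (\<lambda>(i,j). E t i j))) =
     (\<lambda>t. \<Sum>p \<in> {p. p permutes {0..<n}}. signof p * (\<Prod>i=0..<n. E t i (p i)))"
  proof
    fix t
    show "det (mat n n (\<lambda>(i,j). E t i j)) =
     (\<Sum>p \<in> {p. p permutes {0..<n}}. signof p * (\<Prod>i=0..<n. E t i (p i)))"
      apply (subst det_def'[of _ n], simp)
      apply (rule sum.cong, simp)
      apply (rule arg_cong[where f="\<lambda>x. _ * x"])
      apply (rule prod.cong, simp)
      using permutes_in_image by fastforce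
  qed
  show ?thesis unfolding eq
    by (intro continuous_intros assms) (auto dest: permutes_in_image)
qed

lemma cont_if: "continuous_on S f \<Longrightarrow> continuous_on S g \<Longrightarrow> continuous_on S (\<lambda>x. if P then f x else g x)"
  by (cases P) auto

lemma det_diag:
  "det (mat n n (\<lambda>(i,j). if i = j then (d i :: 'a :: comm_ring_1) else 0)) = (\<Prod>i<n. d i)"
  apply (subst det_upper_triangular[of _ n])
    apply (auto intro!: upper_triangularI simp: prod_list_diag_prod atLeast0LessThan)
  done

lemma det_first_col_zero:
  fixes X :: "'a::comm_ring_1 mat"
  assumes X: "X \<in> carrier_mat (Suc n) (Suc n)"
    and z: "\<And>i. 0 < i \<Longrightarrow> i < Suc n \<Longrightarrow> X $$ (i,0) = 0"
  shows "det X = X $$ (0,0) * det (mat n n (\<lambda>(i,j). X $$ (Suc i, Suc j)))"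
proof -
  have "det X = (\<Sum>i<Suc n. X $$ (i,0) * cofactor X i 0)"
    by (rule laplace_expansion_column[OF X], simp)
  also have "\<dots> = X $$ (0,0) * cofactor X 0 0"
    by (subst sum.lessThan_Suc_shift, simp add: z)
  also have "cofactor X 0 0 = det (mat_delete X 0 0)" unfolding cofactor_def by simp
  also have "mat_delete X 0 0 = mat n n (\<lambda>(i,j). X $$ (Suc i, Suc j))"
    using X unfolding mat_delete_def by (auto intro!: eq_matI)
  finally show ?thesis .
qed

definition Gm :: "nat \<Rightarrow> (nat \<Rightarrow> complex) \<Rightarrow> (nat \<Rightarrow> complex) \<Rightarrow> complex mat" where
  "Gm n d w = mat n n (\<lambda>(i,j). (if i = j then d i else 0) - w i)"

definition Km :: "nat \<Rightarrow> (nat \<Rightarrow> complex) \<Rightarrow> (nat \<Rightarrow> complex) \<Rightarrow> complex mat" where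
  "Km n d w = mat (Suc n) (Suc n) (\<lambda>(r,c). if r = 0 then 1 else if c = 0 then w (r - 1)
      else if r = c then d (r - 1) else 0)"

definition L1m :: "nat \<Rightarrow> (nat \<Rightarrow> complex) \<Rightarrow> complex mat" where
  "L1m n w = mat (Suc n) (Suc n) (\<lambda>(r,c). if r = c then 1 else if c = 0 then - w (r - 1) else 0)"

definition Em :: "nat \<Rightarrow> (nat \<Rightarrow> complex) \<Rightarrow> (nat \<Rightarrow> complex) \<Rightarrow> complex mat" where
  "Em n d w = mat (Suc n) (Suc n) (\<lambda>(r,c). if r = c then (if r = 0 then (\<Prod>i<n. d i) else 1)
      else if c = 0 then - (w (r - 1) * (\<Prod>k\<in>{..<n}-{r - 1}. d k)) else 0)"

lemma sum_Suc_split: "(\<Sum>k = 0..<Suc n. f k) = f 0 + (\<Sum>k<n. f (Suc k))"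
  unfolding atLeast0LessThan by (rule sum.lessThan_Suc_shift)

lemma sum_if_Suc: "(\<Sum>k<n. if r = Suc k then a k else 0) = (if 0 < r \<and> r - 1 < n then a (r - 1) else (0::'a::comm_monoid_add))"
proof (cases r)
  case 0 then show ?thesis by simp
next
  case (Suc r') then show ?thesis by (simp add: sum.delta)
qed

lemma L1K: "L1m n w * Km n d w = mat (Suc n) (Suc n) (\<lambda>(r,c). if r = 0 then 1 else
     if c = 0 then 0 else Gm n d w $$ (r - 1, c - 1))"
proof (rule eq_matI)
  fix r c assume r: "r < dim_row (mat (Suc n) (Suc n) (\<lambda>(r,c). if r = 0 then (1::complex) else
     if c = 0 then 0 else Gm n d w $$ (r - 1, c - 1)))"
    and c: "c < dim_col (mat (Suc n) (Suc n) (\<lambda>(r,c). if r = 0 then (1::complex) else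
     if c = 0 then 0 else Gm n d w $$ (r - 1, c - 1)))"
  have rc: "r < Suc n" "c < Suc n" using r c by auto
  have "(L1m n w * Km n d w) $$ (r, c) = (\<Sum>k = 0..<Suc n. L1m n w $$ (r,k) * Km n d w $$ (k,c))"
    using rc by (simp add: scalar_prod_def L1m_def Km_def)
  also have "\<dots> = L1m n w $$ (r,0) * Km n d w $$ (0,c) + (\<Sum>k<n. if r = Suc k then Km n d w $$ (r,c) else 0)"
    unfolding sum_Suc_split using rc by (intro arg_cong2[where f="(+)"] refl sum.cong) (auto simp: L1m_def)
  also have "\<dots> = mat (Suc n) (Suc n) (\<lambda>(r,c). if r = 0 then 1 else
     if c = 0 then 0 else Gm n d w $$ (r - 1, c - 1)) $$ (r, c)"
    unfolding sum_if_Suc using rc by (auto simp: L1m_def Km_def Gm_def)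
  finally show "(L1m n w * Km n d w) $$ (r, c) = mat (Suc n) (Suc n) (\<lambda>(r,c). if r = 0 then 1 else
     if c = 0 then 0 else Gm n d w $$ (r - 1, c - 1)) $$ (r, c)" .
qed (auto simp: L1m_def Km_def)

lemma KE: "Km n d w * Em n d w = mat (Suc n) (Suc n) (\<lambda>(r,c). if c = 0 then
     (if r = 0 then (\<Prod>i<n. d i) - (\<Sum>k<n. w k * (\<Prod>j\<in>{..<n}-{k}. d j)) else 0)
     else Km n d w $$ (r, c))" (is "_ = ?R")
proof (rule eq_matI)
  fix r c assume r: "r < dim_row ?R" and c: "c < dim_col ?R"
  have rc: "r < Suc n" "c < Suc n" using r c by auto
  have "(Km n d w * Em n d w) $$ (r, c) = (\<Sum>k = 0..<Suc n. Km n d w $$ (r,k) * Em n d w $$ (k,c))"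
    using rc by (simp add: scalar_prod_def Em_def Km_def)
  also have "\<dots> = Km n d w $$ (r,0) * Em n d w $$ (0,c) + (\<Sum>k<n. Km n d w $$ (r,Suc k) * Em n d w $$ (Suc k,c))"
    unfolding sum_Suc_split ..
  also have "\<dots> = ?R $$ (r, c)"
  proof (cases c)
    case 0
    show ?thesis
    proof (cases r)
      case 0
      show ?thesis using rc \<open>c = 0\<close> \<open>r = 0\<close>
        by (simp add: Km_def Em_def sum_negf)
    next
      case (Suc r')
      have r': "r' < n" using rc Suc by auto
      have "(\<Sum>k<n. Km n d w $$ (r,Suc k) * Em n d w $$ (Suc k,c)) =
            (\<Sum>k<n. if r = Suc k then - (d r' * (w r' * (\<Prod>j\<in>{..<n}-{r'}. d j))) else 0)"
        using rc \<open>c = 0\<close> Suc by (intro sum.cong) (auto simp: Km_def Em_def)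
      also have "\<dots> = - (d r' * (w r' * (\<Prod>j\<in>{..<n}-{r'}. d j)))"
        unfolding sum_if_Suc using Suc r' by simp
      also have "\<dots> = - (w r' * (\<Prod>j<n. d j))"
        using prod.remove[of "{..<n}" r' d] r' by simp
      finally show ?thesis using rc \<open>c = 0\<close> Suc by (simp add: Km_def Em_def)
    qed
  next
    case (Suc c')
    have "(\<Sum>k<n. Km n d w $$ (r,Suc k) * Em n d w $$ (Suc k,c)) =
            (\<Sum>k<n. if c = Suc k then Km n d w $$ (r,c) else 0)"
      using rc Suc by (intro sum.cong) (auto simp: Em_def)
    then show ?thesis unfolding sum_if_Suc using rc Suc by (simp add: Em_def)
  qed
  finally show "(Km n d w * Em n d w) $$ (r, c) = ?R $$ (r, c)" .
qed (auto simp: Em_def Km_def)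

lemma det_L1: "det (L1m n w) = 1"
  apply (subst det_lower_triangular[of "Suc n"])
    apply (auto simp: L1m_def prod_list_diag_prod)
  done

lemma det_E: "det (Em n d w) = (\<Prod>i<n. d i)"
  apply (subst det_lower_triangular[of "Suc n"])
    apply (auto simp: Em_def prod_list_diag_prod)
  done

lemma det_K: "det (Km n d w) = det (Gm n d w)"
proof -
  have "det (L1m n w * Km n d w) = det (L1m n w) * det (Km n d w)"
    by (rule det_mult[of _ "Suc n"]) (auto simp: L1m_def Km_def)
  also have "\<dots> = det (Km n d w)" by (simp add: det_L1)
  finally have "det (Km n d w) = det (L1m n w * Km n d w)" by simp
  also have "\<dots> = 1 * det (mat n n (\<lambda>(i,j). (L1m n w * Km n d w) $$ (Suc i, Suc j)))"
    unfolding L1K by (subst det_first_col_zero[of _ n]) auto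
  also have "mat n n (\<lambda>(i,j). (L1m n w * Km n d w) $$ (Suc i, Suc j)) = Gm n d w"
    unfolding L1K by (auto simp: Gm_def intro!: eq_matI)
  finally show ?thesis by simp
qed

lemma det_G_mult: "det (Gm n d w) * (\<Prod>i<n. d i) =
   ((\<Prod>i<n. d i) - (\<Sum>k<n. w k * (\<Prod>j\<in>{..<n}-{k}. d j))) * (\<Prod>i<n. d i)"
proof -
  have "det (Gm n d w) * (\<Prod>i<n. d i) = det (Km n d w * Em n d w)"
  proof -
    have "det (Km n d w * Em n d w) = det (Km n d w) * det (Em n d w)"
      by (rule det_mult[of _ "Suc n"]) (auto simp: Em_def Km_def)
    then show ?thesis by (simp add: det_K det_E)
  qed
  also have "\<dots> = ((\<Prod>i<n. d i) - (\<Sum>k<n. w k * (\<Prod>j\<in>{..<n}-{k}. d j))) *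
      det (mat n n (\<lambda>(i,j). (Km n d w * Em n d w) $$ (Suc i, Suc j)))"
    unfolding KE by (subst det_first_col_zero[of _ n]) auto
  also have "mat n n (\<lambda>(i,j). (Km n d w * Em n d w) $$ (Suc i, Suc j)) =
     mat n n (\<lambda>(i,j). if i = j then d i else 0)"
    unfolding KE by (auto simp: Km_def intro!: eq_matI)
  finally show ?thesis by (simp add: det_diag)
qed

lemma det_G: "det (Gm n d w) = (\<Prod>i<n. d i) - (\<Sum>k<n. w k * (\<Prod>j\<in>{..<n}-{k}. d j))"
proof -
  define g where "g t = det (Gm n (\<lambda>i. d i + t) w) -
     ((\<Prod>i<n. d i + t) - (\<Sum>k<n. w k * (\<Prod>j\<in>{..<n}-{k}. d j + t)))" for t
  have "g 0 = 0"
  proof (rule cont_zero[where F="(\<lambda>i. - d i) ` {..<n}"])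
    show "continuous_on UNIV g" unfolding g_def Gm_def
      by (intro continuous_intros det_cont) (auto intro!: continuous_intros cont_if)
    fix t assume t: "t \<notin> (\<lambda>i. - d i) ` {..<n}"
    have "(\<Prod>i<n. d i + t) \<noteq> 0"
    proof
      assume "(\<Prod>i<n. d i + t) = 0"
      then obtain i where "i < n" "d i + t = 0" by auto
      then have "t = - d i" by (simp add: eq_neg_iff_add_eq_0 add.commute)
      with t \<open>i < n\<close> show False by auto
    qed
    with det_G_mult[of n "\<lambda>i. d i + t" w] show "g t = 0" unfolding g_def by simp
  qed (simp)
  then show ?thesis unfolding g_def by simp
qed

lemma sum_delta1: "(a::nat) < m \<Longrightarrow> (\<Sum>k = 0..<m. (if k = a then x else 0) * f k) = x * (f a :: 'a::comm_ring_1)"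
proof -
  assume a: "a < m"
  have "(\<Sum>k = 0..<m. (if k = a then x else 0) * f k) = (\<Sum>k = 0..<m. if k = a then x * f a else 0)"
    by (intro sum.cong) auto
  also have "\<dots> = x * f a" using a by (subst sum.delta) auto
  finally show ?thesis .
qed

lemma sum_delta2: "(a::nat) < m \<Longrightarrow> b < m \<Longrightarrow> a \<noteq> b \<Longrightarrow>
   (\<Sum>k = 0..<m. (if k = a then x else if k = b then y else 0) * f k) = x * f a + y * (f b :: 'a::comm_ring_1)"
proof -
  assume ab: "a < m" "b < m" "a \<noteq> b"
  have "(\<Sum>k = 0..<m. (if k = a then x else if k = b then y else 0) * f k) =
        (\<Sum>k = 0..<m. (if k = a then x else 0) * f k + (if k = b then y else 0) * f k)"
    using ab by (intro sum.cong) auto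
  also have "\<dots> = x * f a + y * f b" using ab by (simp add: sum.distrib sum_delta1)
  finally show ?thesis .
qed

definition Lm :: "nat \<Rightarrow> complex mat" where
  "Lm N = mat (2*N) (2*N) (\<lambda>(r,c). if r = c then 1 else if N \<le> r \<and> c = r - N then -1 else 0)"
definition Rm :: "nat \<Rightarrow> complex mat" where
  "Rm N = mat (2*N) (2*N) (\<lambda>(r,c). if r = c then 1 else if c < N \<and> r = c + N then 1 else 0)"

lemma Lm_mult: assumes X: "X \<in> carrier_mat (2*N) (2*N)" and r: "r < 2*N" and c: "c < 2*N"
  shows "(Lm N * X) $$ (r,c) = (if r < N then X $$ (r,c) else X $$ (r,c) - X $$ (r - N, c))"
proof -
  have "(Lm N * X) $$ (r,c) = (\<Sum>k = 0..<2*N. Lm N $$ (r,k) * X $$ (k,c))"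
    using X r c by (simp add: scalar_prod_def Lm_def)
  also have "\<dots> = (if r < N then X $$ (r,c) else X $$ (r,c) - X $$ (r - N, c))"
  proof (cases "r < N")
    case True
    have "(\<Sum>k = 0..<2*N. Lm N $$ (r,k) * X $$ (k,c)) = (\<Sum>k = 0..<2*N. (if k = r then 1 else 0) * X $$ (k,c))"
      using True r by (intro sum.cong) (auto simp: Lm_def)
    then show ?thesis using True r by (simp add: sum_delta1)
  next
    case False
    have "(\<Sum>k = 0..<2*N. Lm N $$ (r,k) * X $$ (k,c)) = (\<Sum>k = 0..<2*N. (if k = r then 1 else if k = r - N then -1 else 0) * X $$ (k,c))"
      using False r by (intro sum.cong) (auto simp: Lm_def)
    then show ?thesis using False r by (simp add: sum_delta2)
  qed
  finally show ?thesis .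
qed

lemma Rm_mult: assumes X: "X \<in> carrier_mat (2*N) (2*N)" and r: "r < 2*N" and c: "c < 2*N"
  shows "(X * Rm N) $$ (r,c) = (if c < N then X $$ (r,c) + X $$ (r, c + N) else X $$ (r,c))"
proof -
  have "(X * Rm N) $$ (r,c) = (\<Sum>k = 0..<2*N. Rm N $$ (k,c) * X $$ (r,k))"
    using X r c by (simp add: scalar_prod_def Rm_def mult.commute)
  also have "\<dots> = (if c < N then X $$ (r,c) + X $$ (r, c + N) else X $$ (r,c))"
  proof (cases "c < N")
    case True
    have "(\<Sum>k = 0..<2*N. Rm N $$ (k,c) * X $$ (r,k)) = (\<Sum>k = 0..<2*N. (if k = c then 1 else if k = c + N then 1 else 0) * X $$ (r,k))"
      using True c by (intro sum.cong) (auto simp: Rm_def)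
    then show ?thesis using True c by (simp add: sum_delta2)
  next
    case False
    have "(\<Sum>k = 0..<2*N. Rm N $$ (k,c) * X $$ (r,k)) = (\<Sum>k = 0..<2*N. (if k = c then 1 else 0) * X $$ (r,k))"
      using False c by (intro sum.cong) (auto simp: Rm_def)
    then show ?thesis using False c by (simp add: sum_delta1)
  qed
  finally show ?thesis .
qed

lemma det_Lm: "det (Lm N) = 1"
  by (subst det_lower_triangular[of "2*N"]) (auto simp: Lm_def prod_list_diag_prod)

lemma det_Rm: "det (Rm N) = 1"
  by (subst det_lower_triangular[of "2*N"]) (auto simp: Rm_def prod_list_diag_prod)

lemma S_flower: assumes "N \<ge> 1" shows "S_entry N flower_o flower_t r c =
   1 / real N - (if (if c < N then c else c - N) = (if r < N then r else r - N) \<and> ((r < N) = (N \<le> c)) then 1 else 0)"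
  using assms by (simp add: S_entry_def Let_def deg_def flower_o_def flower_t_def)

definition Mf :: "nat \<Rightarrow> (nat \<Rightarrow> complex) \<Rightarrow> complex mat" where
  "Mf N z = 1\<^sub>m (2 * N) - Z_mat N z * map_mat complex_of_real (S_mat N flower_o flower_t)"

lemma Mf_carrier: "Mf N z \<in> carrier_mat (2*N) (2*N)"
  unfolding Mf_def carrier_mat_def by (simp add: Z_mat_def S_mat_def)

lemma Mf_entry: assumes N: "N \<ge> 1" and r: "r < 2*N" and c: "c < 2*N"
  shows "Mf N z $$ (r,c) = (if r = c then 1 else 0) - z (if r < N then r else r - N) *
     (1 / of_nat N - (if (if c < N then c else c - N) = (if r < N then r else r - N) \<and> ((r < N) = (N \<le> c)) then 1 else 0))"
proof -
  have "(Z_mat N z * map_mat complex_of_real (S_mat N flower_o flower_t)) $$ (r,c) =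
     (\<Sum>k = 0..<2*N. (if k = r then z (if r < N then r else r - N) else 0) *
        complex_of_real (S_entry N flower_o flower_t k c))"
    using r c by (auto simp: scalar_prod_def Z_mat_def S_mat_def intro!: sum.cong)
  also have "\<dots> = z (if r < N then r else r - N) * complex_of_real (S_entry N flower_o flower_t r c)"
    using r by (rule sum_delta1)
  finally have e: "(Z_mat N z * map_mat complex_of_real (S_mat N flower_o flower_t)) $$ (r,c) =
     z (if r < N then r else r - N) * complex_of_real (S_entry N flower_o flower_t r c)" .
  have "Mf N z $$ (r,c) = 1\<^sub>m (2 * N) $$ (r,c) - (Z_mat N z * map_mat complex_of_real (S_mat N flower_o flower_t)) $$ (r,c)"
    unfolding Mf_def using r c by (simp add: Z_mat_def S_mat_def)
  then show ?thesis using r c N e by (simp add: S_flower)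
qed

lemma Mf_11: "N \<ge> 1 \<Longrightarrow> r < N \<Longrightarrow> c < N \<Longrightarrow> Mf N z $$ (r,c) = (if r = c then 1 else 0) - z r / of_nat N"
  by (subst Mf_entry) auto
lemma Mf_12: "N \<ge> 1 \<Longrightarrow> r < N \<Longrightarrow> c < N \<Longrightarrow> Mf N z $$ (r,c+N) = (if r = c then z r else 0) - z r / of_nat N"
  by (subst Mf_entry) (auto simp: algebra_simps)
lemma Mf_21: "N \<ge> 1 \<Longrightarrow> r < N \<Longrightarrow> c < N \<Longrightarrow> Mf N z $$ (r+N,c) = (if r = c then z r else 0) - z r / of_nat N"
  by (subst Mf_entry) (auto simp: algebra_simps)
lemma Mf_22: "N \<ge> 1 \<Longrightarrow> r < N \<Longrightarrow> c < N \<Longrightarrow> Mf N z $$ (r+N,c+N) = (if r = c then 1 else 0) - z r / of_nat N"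
  by (subst Mf_entry) auto

lemma F_block: assumes N: "N \<ge> 1"
  shows "Lm N * Mf N z * Rm N = four_block_mat (Gm N (\<lambda>i. 1 + z i) (\<lambda>i. 2 / of_nat N * z i))
     (mat N N (\<lambda>(i,j). (if i = j then z i else 0) - z i / of_nat N)) (0\<^sub>m N N)
     (mat N N (\<lambda>(i,j). if i = j then 1 - z i else 0))" (is "?F = ?B")
proof (rule eq_matI)
  have LM: "Lm N * Mf N z \<in> carrier_mat (2*N) (2*N)"
    using Mf_carrier unfolding carrier_mat_def by (simp add: Lm_def)
  fix r c assume r: "r < dim_row ?B" and c: "c < dim_col ?B"
  have rc: "r < 2*N" "c < 2*N" using r c by (auto simp: Gm_def)
  have e1: "?F $$ (r,c) = (if c < N then (Lm N * Mf N z) $$ (r,c) + (Lm N * Mf N z) $$ (r,c+N)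
      else (Lm N * Mf N z) $$ (r,c))"
    by (rule Rm_mult[OF LM rc])
  show "?F $$ (r,c) = ?B $$ (r,c)"
  proof (cases "r < N")
    case rN: True
    show ?thesis
    proof (cases "c < N")
      case cN: True
      have "?F $$ (r,c) = Mf N z $$ (r,c) + Mf N z $$ (r,c+N)"
        using e1 cN rN rc by (simp add: Lm_mult[OF Mf_carrier])
      also have "\<dots> = ((if r = c then 1 else 0) - z r / of_nat N) + ((if r = c then z r else 0) - z r / of_nat N)"
        using rN cN N by (simp add: Mf_11 Mf_12)
      also have "\<dots> = ?B $$ (r,c)" using rN cN rc N
        by (cases "r = c") (simp_all add: index_mat_four_block Gm_def)
      finally show ?thesis .
    next
      case cN: False
      define c' where "c' = c - N"
      have c': "c = c' + N" "c' < N" using cN rc unfolding c'_def by auto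
      have "?F $$ (r,c) = Mf N z $$ (r,c' + N)"
        using e1 cN rN rc c' by (simp add: Lm_mult[OF Mf_carrier])
      also have "\<dots> = (if r = c' then z r else 0) - z r / of_nat N"
        using rN c' N by (simp add: Mf_12)
      also have "\<dots> = ?B $$ (r,c)" using rN c' rc N
        by (simp add: index_mat_four_block Gm_def)
      finally show ?thesis .
    qed
  next
    case rN: False
    define r' where "r' = r - N"
    have r': "r = r' + N" "r' < N" using rN rc unfolding r'_def by auto
    show ?thesis
    proof (cases "c < N")
      case cN: True
      have "?F $$ (r,c) = (Mf N z $$ (r'+N,c) - Mf N z $$ (r',c)) + (Mf N z $$ (r'+N,c+N) - Mf N z $$ (r',c+N))"
        using e1 cN rN rc r' by (simp add: Lm_mult[OF Mf_carrier])
      also have "\<dots> = 0"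
        using r' cN N by (simp add: Mf_11 Mf_12 Mf_21 Mf_22)
      also have "\<dots> = ?B $$ (r,c)" using r' cN rc N
        by (simp add: index_mat_four_block Gm_def)
      finally show ?thesis .
    next
      case cN: False
      define c' where "c' = c - N"
      have c': "c = c' + N" "c' < N" using cN rc unfolding c'_def by auto
      have "?F $$ (r,c) = Mf N z $$ (r'+N,c'+N) - Mf N z $$ (r',c'+N)"
        using e1 cN rN rc r' c' by (simp add: Lm_mult[OF Mf_carrier])
      also have "\<dots> = ((if r' = c' then 1 else 0) - z r' / of_nat N) - ((if r' = c' then z r' else 0) - z r' / of_nat N)"
        using r' c' N by (simp add: Mf_12 Mf_22)
      also have "\<dots> = ?B $$ (r,c)" using r' c' rc N
        by (cases "r' = c'") (simp_all add: index_mat_four_block Gm_def)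
      finally show ?thesis .
    qed
  qed
qed (auto simp: Gm_def Rm_def Lm_def)

lemma P_flower: assumes N: "N \<ge> 1"
  shows "P_graph N flower_o flower_t z = (\<Prod>j<N. 1 - z j) *
     ((\<Prod>i<N. 1 + z i) - (\<Sum>k<N. 2 / of_nat N * z k * (\<Prod>j\<in>{..<N}-{k}. 1 + z j)))"
proof -
  have LM: "Lm N * Mf N z \<in> carrier_mat (2*N) (2*N)"
    using Mf_carrier unfolding carrier_mat_def by (simp add: Lm_def)
  have "det (Lm N * Mf N z * Rm N) = det (Lm N * Mf N z) * det (Rm N)"
    by (rule det_mult[OF LM]) (simp add: Rm_def)
  also have "det (Lm N * Mf N z) = det (Lm N) * det (Mf N z)"
    by (rule det_mult[OF _ Mf_carrier]) (simp add: Lm_def)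
  finally have "det (Mf N z) = det (Lm N * Mf N z * Rm N)" by (simp add: det_Lm det_Rm)
  also have "\<dots> = det (Gm N (\<lambda>i. 1 + z i) (\<lambda>i. 2 / of_nat N * z i)) *
       det (mat N N (\<lambda>(i,j). if i = j then 1 - z i else 0))"
    unfolding F_block[OF N]
    by (rule det_four_block_mat_lower_left_zero[of _ N]) (auto simp: Gm_def)
  finally have "det (Mf N z) = (\<Prod>j<N. 1 - z j) *
     ((\<Prod>i<N. 1 + z i) - (\<Sum>k<N. 2 / of_nat N * z k * (\<Prod>j\<in>{..<N}-{k}. 1 + z j)))"
    by (simp add: det_G det_diag mult.commute)
  then show ?thesis unfolding P_graph_def Mf_def .
qed

lemma Qf_eq: assumes N: "N \<ge> 1"
  shows "(\<Prod>i<N. 1 + z i) - (\<Sum>k<N. 2 / of_nat N * z k * (\<Prod>j\<in>{..<N}-{k}. 1 + z j))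
     = - (1 / of_nat N) * P_mandarin_s N z"
proof -
  define Pk where "Pk k = (\<Prod>j\<in>{..<N}-{k}. 1 + z j)" for k
  define P where "P = (\<Prod>i<N. 1 + z i)"
  define S0 where "S0 = (\<Sum>k<N. Pk k)"
  have key: "(\<Sum>k<N. (1 + z k) * Pk k) = of_nat N * P"
  proof -
    have "(\<Sum>k<N. (1 + z k) * Pk k) = (\<Sum>k<N. P)"
      unfolding Pk_def P_def by (intro sum.cong refl) (simp add: prod.remove)
    then show ?thesis by simp
  qed
  have PM: "P_mandarin_s N z = of_nat N * P - 2 * S0"
  proof -
    have "P_mandarin_s N z = (\<Sum>k<N. (1 + z k) * Pk k - 2 * Pk k)"
      unfolding P_mandarin_s_def Pk_def by (intro sum.cong refl) (simp add: add.commute algebra_simps)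
    also have "\<dots> = of_nat N * P - 2 * S0"
      by (simp add: sum_subtractf key S0_def sum_distrib_left)
    finally show ?thesis .
  qed
  have L: "(\<Sum>k<N. 2 / of_nat N * z k * Pk k) = 2 / of_nat N * (of_nat N * P - S0)"
  proof -
    have "(\<Sum>k<N. 2 / of_nat N * z k * Pk k) = 2 / of_nat N * (\<Sum>k<N. (1 + z k) * Pk k - Pk k)"
      by (simp add: sum_distrib_left algebra_simps)
    also have "\<dots> = 2 / of_nat N * (of_nat N * P - S0)"
      by (simp add: sum_subtractf key S0_def)
    finally show ?thesis .
  qed
  have "N \<noteq> 0" using N by simp
  then show ?thesis unfolding PM using L unfolding Pk_def P_def
    by (simp add: field_simps)
qed

lemma poly_const: "poly_fun N (\<lambda>z. c)"
  unfolding poly_fun_def by (intro exI[of _ "{\<lambda>_. 0}"] exI[of _ "\<lambda>_. c"]) simp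

lemma poly_var: assumes "j < N" shows "poly_fun N (\<lambda>z. z j)"
  unfolding poly_fun_def
proof (intro exI[of _ "{\<lambda>i. if i = j then 1 else 0}"] exI[of _ "\<lambda>_. 1"] conjI allI)
  fix z :: "nat \<Rightarrow> complex"
  have "(\<Prod>i<N. z i ^ (if i = j then 1 else 0)) = (\<Prod>i<N. if i = j then z i else 1)"
    by (intro prod.cong) auto
  also have "\<dots> = z j" using assms by (subst prod.delta) auto
  finally show "z j = (\<Sum>\<alpha>\<in>{\<lambda>i. if i = j then 1 else 0}. 1 * (\<Prod>i<N. z i ^ \<alpha> i))" by simp
qed simp

lemma poly_add: assumes "poly_fun N f" "poly_fun N g" shows "poly_fun N (\<lambda>z. f z + g z)"
proof -
  obtain M1 a1 where 1: "finite M1" "\<And>z. f z = (\<Sum>\<alpha>\<in>M1. a1 \<alpha> * (\<Prod>j<N. z j ^ \<alpha> j))"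
    using assms(1) unfolding poly_fun_def by blast
  obtain M2 a2 where 2: "finite M2" "\<And>z. g z = (\<Sum>\<alpha>\<in>M2. a2 \<alpha> * (\<Prod>j<N. z j ^ \<alpha> j))"
    using assms(2) unfolding poly_fun_def by blast
  let ?a = "\<lambda>\<alpha>. (if \<alpha> \<in> M1 then a1 \<alpha> else 0) + (if \<alpha> \<in> M2 then a2 \<alpha> else 0)"
  show ?thesis unfolding poly_fun_def
  proof (intro exI[of _ "M1 \<union> M2"] exI[of _ ?a] conjI allI)
    fix z :: "nat \<Rightarrow> complex"
    let ?m = "\<lambda>\<alpha>. (\<Prod>j<N. z j ^ \<alpha> j)"
    have "(\<Sum>\<alpha>\<in>M1 \<union> M2. ?a \<alpha> * ?m \<alpha>) =
       (\<Sum>\<alpha>\<in>M1 \<union> M2. (if \<alpha> \<in> M1 then a1 \<alpha> * ?m \<alpha> else 0)) +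
       (\<Sum>\<alpha>\<in>M1 \<union> M2. (if \<alpha> \<in> M2 then a2 \<alpha> * ?m \<alpha> else 0))"
      by (subst sum.distrib[symmetric]) (intro sum.cong refl, auto simp: algebra_simps)
    also have "\<dots> = (\<Sum>\<alpha>\<in>M1. a1 \<alpha> * ?m \<alpha>) + (\<Sum>\<alpha>\<in>M2. a2 \<alpha> * ?m \<alpha>)"
      using 1(1) 2(1) by (simp add: sum.inter_restrict[symmetric] Int_absorb1 Int_absorb2 Int_commute)
    finally show "f z + g z = (\<Sum>\<alpha>\<in>M1 \<union> M2. ?a \<alpha> * ?m \<alpha>)" using 1(2) 2(2) by simp
  qed (use 1 2 in simp)
qed

lemma poly_mult: assumes "poly_fun N f" "poly_fun N g" shows "poly_fun N (\<lambda>z. f z * g z)"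
proof -
  obtain M1 a1 where 1: "finite M1" "\<And>z. f z = (\<Sum>\<alpha>\<in>M1. a1 \<alpha> * (\<Prod>j<N. z j ^ \<alpha> j))"
    using assms(1) unfolding poly_fun_def by blast
  obtain M2 a2 where 2: "finite M2" "\<And>z. g z = (\<Sum>\<alpha>\<in>M2. a2 \<alpha> * (\<Prod>j<N. z j ^ \<alpha> j))"
    using assms(2) unfolding poly_fun_def by blast
  define S where "S = M1 \<times> M2"
  define h :: "(nat \<Rightarrow> nat) \<times> (nat \<Rightarrow> nat) \<Rightarrow> nat \<Rightarrow> nat" where "h x = (\<lambda>i. fst x i + snd x i)" for x
  define a where "a \<gamma> = (\<Sum>x\<in>{x\<in>S. h x = \<gamma>}. a1 (fst x) * a2 (snd x))" for \<gamma>
  have fS: "finite S" unfolding S_def using 1(1) 2(1) by simp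
  show ?thesis unfolding poly_fun_def
  proof (intro exI[of _ "h ` S"] exI[of _ a] conjI allI)
    fix z :: "nat \<Rightarrow> complex"
    let ?m = "\<lambda>\<alpha>. (\<Prod>j<N. z j ^ \<alpha> j)"
    have mm: "?m (fst x) * ?m (snd x) = ?m (h x)" for x
      unfolding h_def by (simp add: power_add prod.distrib)
    have "f z * g z = (\<Sum>x\<in>S. a1 (fst x) * a2 (snd x) * ?m (h x))"
      unfolding 1(2) 2(2) S_def sum_product sum.cartesian_product
      by (intro sum.cong refl) (simp add: mm[symmetric] algebra_simps split: prod.splits)
    also have "\<dots> = (\<Sum>\<gamma>\<in>h ` S. \<Sum>x\<in>{x\<in>S. h x = \<gamma>}. a1 (fst x) * a2 (snd x) * ?m (h x))"
      by (rule sum.image_gen[OF fS])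
    also have "\<dots> = (\<Sum>\<gamma>\<in>h ` S. a \<gamma> * ?m \<gamma>)"
      unfolding a_def sum_distrib_right by (intro sum.cong refl) auto
    finally show "f z * g z = (\<Sum>\<gamma>\<in>h ` S. a \<gamma> * ?m \<gamma>)" .
  qed (use fS in simp)
qed

lemma poly_diff: assumes "poly_fun N f" "poly_fun N g" shows "poly_fun N (\<lambda>z. f z - g z)"
proof -
  have "poly_fun N (\<lambda>z. f z + (-1) * g z)" by (intro poly_add poly_mult poly_const assms)
  then show ?thesis by simp
qed

lemma poly_sum: "finite A \<Longrightarrow> (\<And>i. i \<in> A \<Longrightarrow> poly_fun N (f i)) \<Longrightarrow> poly_fun N (\<lambda>z. \<Sum>i\<in>A. f i z)"
  by (induction A rule: finite_induct) (auto intro: poly_add poly_const)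

lemma poly_prod: "finite A \<Longrightarrow> (\<And>i. i \<in> A \<Longrightarrow> poly_fun N (f i)) \<Longrightarrow> poly_fun N (\<lambda>z. \<Prod>i\<in>A. f i z)"
  by (induction A rule: finite_induct) (auto intro: poly_mult poly_const)

lemma poly_PM: "poly_fun N (\<lambda>z. c * P_mandarin_s N z)"
  unfolding P_mandarin_s_def
  by (intro poly_mult poly_const poly_sum poly_prod poly_add poly_diff poly_var) auto

lemma P_flower_fact: assumes N: "N \<ge> 1"
  shows "P_graph N flower_o flower_t z = - (1 / of_nat N) * P_mandarin_s N z * (\<Prod>j<N. 1 - z j)"
  using P_flower[OF N, of z] Qf_eq[OF N, of z] by (simp add: mult.commute)

lemma Psym: assumes N: "N \<ge> 1"
  shows "P_flower_sym N = (\<lambda>z. - (1 / of_nat N) * P_mandarin_s N z)"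
  unfolding P_flower_sym_def
proof (rule the_equality)
  show "poly_fun N (\<lambda>z. - (1 / of_nat N) * P_mandarin_s N z) \<and>
    (\<forall>z. P_graph N flower_o flower_t z = - (1 / of_nat N) * P_mandarin_s N z * (\<Prod>j<N. 1 - z j))"
    using poly_PM P_flower_fact[OF N] by blast
next
  fix Q assume Q: "poly_fun N Q \<and> (\<forall>z. P_graph N flower_o flower_t z = Q z * (\<Prod>j<N. 1 - z j))"
  obtain M a where M: "finite M" "\<And>z. Q z = (\<Sum>\<alpha>\<in>M. a \<alpha> * (\<Prod>j<N. z j ^ \<alpha> j))"
    using Q unfolding poly_fun_def by blast
  show "Q = (\<lambda>z. - (1 / of_nat N) * P_mandarin_s N z)"
  proof
    fix z
    define g where "g t = Q (\<lambda>j. z j + t) - - (1 / of_nat N) * P_mandarin_s N (\<lambda>j. z j + t)" for t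
    have "g 0 = 0"
    proof (rule cont_zero[where F="(\<lambda>j. 1 - z j) ` {..<N}"])
      show "continuous_on UNIV g" unfolding g_def M(2) P_mandarin_s_def
        by (intro continuous_intros)
      fix t assume t: "t \<notin> (\<lambda>j. 1 - z j) ` {..<N}"
      have nz: "(\<Prod>j<N. 1 - (z j + t)) \<noteq> 0"
      proof
        assume "(\<Prod>j<N. 1 - (z j + t)) = 0"
        then obtain j where "j < N" "1 - (z j + t) = 0" by auto
        then have "t = 1 - z j" by (simp add: algebra_simps)
        with t \<open>j < N\<close> show False by auto
      qed
      have "Q (\<lambda>j. z j + t) * (\<Prod>j<N. 1 - (z j + t)) =
         - (1 / of_nat N) * P_mandarin_s N (\<lambda>j. z j + t) * (\<Prod>j<N. 1 - (z j + t))"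
        using Q P_flower_fact[OF N, of "\<lambda>j. z j + t"] by simp
      then have "Q (\<lambda>j. z j + t) = - (1 / of_nat N) * P_mandarin_s N (\<lambda>j. z j + t)"
        using mult_right_cancel[OF nz] by blast
      then show "g t = 0" unfolding g_def by simp
    qed simp
    then show "Q z = - (1 / of_nat N) * P_mandarin_s N z" unfolding g_def by (simp add: eq_neg_iff_add_eq_0)
  qed
qed

lemma exp_cos_sin: "exp (\<i> * complex_of_real x) = complex_of_real (cos x) + \<i> * complex_of_real (sin x)"
  by (simp add: cis_conv_exp[symmetric] cis.code complex_eq_iff)

lemma cos_m1_sin: "cos x = -1 \<Longrightarrow> sin x = (0::real)"
  using sin_cos_squared_add[of x] by simp

lemma key_id: assumes c: "1 + c \<noteq> (0::real)" and sc: "s^2 + c^2 = 1"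
  shows "complex_of_real c + \<i> * complex_of_real s - 1 =
     \<i> * complex_of_real (s / (1 + c)) * (complex_of_real c + \<i> * complex_of_real s + 1)"
proof -
  have "s * s = (1 - c) * (1 + c)" using sc by (simp add: power2_eq_square algebra_simps)
  then have e: "- (s * (s / (1 + c))) = c - 1" using c by (simp add: field_simps)
  show ?thesis using c e by (simp add: complex_eq_iff field_simps)
qed

lemma exist_sym:
  assumes N: "N \<ge> 1" and PM: "P_mandarin_s N (\<lambda>j. exp (\<i> * complex_of_real (k * l j))) = 0"
  shows "\<exists>A B. (\<forall>j<N. coefC l k A B j = A j \<and> coefD l k A B j = B j) \<and>
     (\<exists>a. \<forall>j<N. A j = a) \<and> (\<Sum>j<N. B j) = 0 \<and> (\<exists>j<N. A j \<noteq> 0 \<or> B j \<noteq> 0)"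
proof -
  define th where "th j = k * l j" for j
  define z where "z j = exp (\<i> * complex_of_real (k * l j))" for j
  have z: "z j = complex_of_real (cos (th j)) + \<i> * complex_of_real (sin (th j))" for j
    unfolding z_def th_def by (rule exp_cos_sin)
  have zm1: "z j = -1 \<longleftrightarrow> cos (th j) = -1" for j
  proof
    assume "z j = -1" then show "cos (th j) = -1" unfolding z by (simp add: complex_eq_iff)
  next
    assume "cos (th j) = -1" then show "z j = -1" unfolding z using cos_m1_sin by (simp add: complex_eq_iff)
  qed
  show ?thesis
  proof (cases "\<exists>j1 j2. j1 < N \<and> j2 < N \<and> j1 \<noteq> j2 \<and> cos (th j1) = -1 \<and> cos (th j2) = -1")
    case True
    then obtain j1 j2 where j: "j1 < N" "j2 < N" "j1 \<noteq> j2" "cos (th j1) = -1" "cos (th j2) = -1" by blast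
    have s: "sin (th j1) = 0" "sin (th j2) = 0" using j cos_m1_sin by auto
    define B :: "nat \<Rightarrow> complex" where "B j = (if j = j1 then 1 else if j = j2 then -1 else 0)" for j
    have "(\<Sum>j<N. B j) = (\<Sum>j<N. (if j = j1 then 1 else 0) + (if j = j2 then -1 else 0))"
      unfolding B_def using j by (intro sum.cong) auto
    also have "\<dots> = 0" using j by (simp add: sum.distrib)
    finally have sB: "(\<Sum>j<N. B j) = 0" .
    have C: "\<forall>j<N. coefC l k (\<lambda>_. 0) B j = 0 \<and> coefD l k (\<lambda>_. 0) B j = B j"
      unfolding coefC_def coefD_def B_def using s j by (auto simp: th_def)
    have nzB: "\<exists>j<N. B j \<noteq> 0" using j by (auto simp: B_def intro!: exI[of _ j1])
    show ?thesis by (intro exI[of _ "\<lambda>_. 0"] exI[of _ B]) (use C nzB sB in auto)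
  next
    case False
    note F = False
    show ?thesis
    proof (cases "\<exists>j0<N. cos (th j0) = -1")
      case True
      then obtain j0 where j0: "j0 < N" "cos (th j0) = -1" by blast
      have other: "j < N \<Longrightarrow> j \<noteq> j0 \<Longrightarrow> z j + 1 \<noteq> 0" for j
      proof -
        assume "j < N" "j \<noteq> j0"
        then have "z j \<noteq> -1" using F j0 zm1[of j] by auto
        then show "z j + 1 \<noteq> 0" by (metis eq_neg_iff_add_eq_0)
      qed
      have z0: "z j0 = -1" using zm1 j0 by simp
      have "P_mandarin_s N z = (z j0 - 1) * (\<Prod>i\<in>{..<N}-{j0}. z i + 1)"
        unfolding P_mandarin_s_def
      proof (subst sum.remove[of _ j0], simp, use j0 in simp)
        show "(z j0 - 1) * (\<Prod>i\<in>{..<N}-{j0}. z i + 1) +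
          (\<Sum>j\<in>{..<N} - {j0}. (z j - 1) * (\<Prod>i\<in>{..<N} - {j}. z i + 1)) =
          (z j0 - 1) * (\<Prod>i\<in>{..<N}-{j0}. z i + 1)"
        proof -
          have "(\<Sum>j\<in>{..<N} - {j0}. (z j - 1) * (\<Prod>i\<in>{..<N} - {j}. z i + 1)) = 0"
          proof (rule sum.neutral, rule ballI)
            fix x assume x: "x \<in> {..<N} - {j0}"
            have "(\<Prod>i\<in>{..<N} - {x}. z i + 1) = 0"
              by (rule prod_zero) (use x j0 z0 in \<open>auto intro!: bexI[of _ j0]\<close>)
            then show "(z x - 1) * (\<Prod>i\<in>{..<N} - {x}. z i + 1) = 0" by simp
          qed
          then show ?thesis by simp
        qed
      qed
      also have "\<dots> \<noteq> 0" using z0 other by (auto simp: prod_zero_iff)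
      finally have "P_mandarin_s N z \<noteq> 0" .
      with PM show ?thesis unfolding z_def by simp
    next
      case False
      then have nc: "j < N \<Longrightarrow> 1 + cos (th j) \<noteq> 0" for j by auto
      have nz: "j < N \<Longrightarrow> z j + 1 \<noteq> 0" for j
      proof -
        assume "j < N"
        then have "z j \<noteq> -1" using False zm1[of j] by auto
        then show "z j + 1 \<noteq> 0" by (metis eq_neg_iff_add_eq_0)
      qed
      define B where "B j = complex_of_real (sin (th j) / (1 + cos (th j)))" for j
      have id: "j < N \<Longrightarrow> z j - 1 = \<i> * B j * (z j + 1)" for j
        unfolding z B_def by (rule key_id[OF nc]) (simp_all add: sin_cos_squared_add)
      have "P_mandarin_s N z = (\<Sum>j<N. \<i> * B j * ((z j + 1) * (\<Prod>i\<in>{..<N}-{j}. z i + 1)))"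
        unfolding P_mandarin_s_def by (intro sum.cong refl) (simp add: id)
      also have "\<dots> = (\<Sum>j<N. \<i> * B j * (\<Prod>i<N. z i + 1))"
        by (intro sum.cong refl) (simp add: prod.remove)
      also have "\<dots> = \<i> * (\<Sum>j<N. B j) * (\<Prod>i<N. z i + 1)"
        by (simp add: sum_distrib_left sum_distrib_right mult.assoc)
      finally have "\<i> * (\<Sum>j<N. B j) * (\<Prod>i<N. z i + 1) = 0" using PM unfolding z_def by simp
      moreover have "(\<Prod>i<N. z i + 1) \<noteq> 0" using nz by (auto simp: prod_zero_iff)
      ultimately have sB: "(\<Sum>j<N. B j) = 0" by simp
      have C: "coefC l k (\<lambda>_. 1) B j = 1 \<and> coefD l k (\<lambda>_. 1) B j = B j" if j: "j < N" for j
      proof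
        have c1: "1 + cos (th j) \<noteq> 0" by (rule nc[OF j])
        have sc: "sin (th j) ^ 2 = 1 - cos (th j) ^ 2" using sin_cos_squared_add[of "th j"] by linarith
        show "coefC l k (\<lambda>_. 1) B j = 1"
        proof -
          have "cos (th j) + sin (th j) * (sin (th j) / (1 + cos (th j))) = 1"
            using c1 sc by (simp add: field_simps power2_eq_square)
          then have "complex_of_real (cos (th j) + sin (th j) * (sin (th j) / (1 + cos (th j)))) = 1"
            by simp
          then show ?thesis unfolding coefC_def B_def th_def
            by (simp add: mult.commute)
        qed
        show "coefD l k (\<lambda>_. 1) B j = B j"
        proof -
          have "sin (th j) - sin (th j) / (1 + cos (th j)) * cos (th j) = sin (th j) / (1 + cos (th j))"
            using c1 by (simp add: field_simps)
          then have "complex_of_real (sin (th j) - sin (th j) / (1 + cos (th j)) * cos (th j)) =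
              complex_of_real (sin (th j) / (1 + cos (th j)))"
            by simp
          then show ?thesis unfolding coefD_def B_def th_def
            by (simp add: mult.commute)
        qed
      qed
      have ex: "\<exists>j<N. (1::complex) \<noteq> 0 \<or> B j \<noteq> 0" using N by (intro exI[of _ 0]) auto
      show ?thesis by (intro exI[of _ "\<lambda>_. 1"] exI[of _ B]) (use C sB ex in auto)
    qed
  qed
qed

lemma std_flower_iff:
  assumes k: "k > 0" and sym: "\<forall>j<N. coefC l k A B j = A j \<and> coefD l k A B j = B j"
  shows "std_cond N flower_o flower_t l k A B \<longleftrightarrow> (\<exists>a. \<forall>j<N. A j = a) \<and> (\<Sum>j<N. B j) = 0"
proof -
  have c: "A j * complex_of_real (cos (k * l j)) + B j * complex_of_real (sin (k * l j)) = A j" if "j < N" for j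
    using sym that unfolding coefC_def by simp
  have d: "- (complex_of_real k * (- A j * complex_of_real (sin (k * l j)) + B j * complex_of_real (cos (k * l j))))
      = complex_of_real k * B j" if "j < N" for j
  proof -
    have "A j * complex_of_real (sin (k * l j)) - B j * complex_of_real (cos (k * l j)) = B j"
      using sym that unfolding coefD_def by simp
    then show ?thesis by (simp add: algebra_simps)
  qed
  have p1: "(\<exists>F :: nat \<Rightarrow> complex. \<forall>j<N. A j = F (flower_o j) \<and>
         A j * complex_of_real (cos (k * l j)) + B j * complex_of_real (sin (k * l j)) = F (flower_t j))
     \<longleftrightarrow> (\<exists>a. \<forall>j<N. A j = a)"
  proof
    assume "\<exists>F :: nat \<Rightarrow> complex. \<forall>j<N. A j = F (flower_o j) \<and>
         A j * complex_of_real (cos (k * l j)) + B j * complex_of_real (sin (k * l j)) = F (flower_t j)"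
    then show "\<exists>a. \<forall>j<N. A j = a" unfolding flower_o_def by blast
  next
    assume "\<exists>a. \<forall>j<N. A j = a"
    then obtain a where a: "\<forall>j<N. A j = a" by blast
    show "\<exists>F :: nat \<Rightarrow> complex. \<forall>j<N. A j = F (flower_o j) \<and>
         A j * complex_of_real (cos (k * l j)) + B j * complex_of_real (sin (k * l j)) = F (flower_t j)"
      using a c by (intro exI[of _ "\<lambda>_. a"]) (simp add: flower_o_def flower_t_def)
  qed
  have set: "{j. j < N \<and> flower_o j = v} = (if v = 0 then {..<N} else {})"
     "{j. j < N \<and> flower_t j = v} = (if v = 0 then {..<N} else {})" for v
    unfolding flower_o_def flower_t_def by auto
  have e: "(\<Sum>j | j < N \<and> flower_o j = v. complex_of_real k * B j)
         + (\<Sum>j | j < N \<and> flower_t j = v.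
              - (complex_of_real k * (- A j * complex_of_real (sin (k * l j))
                                      + B j * complex_of_real (cos (k * l j)))))
       = (if v = 0 then 2 * complex_of_real k * (\<Sum>j<N. B j) else 0)" for v
  proof (cases "v = 0")
    case True
    have "(\<Sum>j<N. - (complex_of_real k * (- A j * complex_of_real (sin (k * l j))
                                      + B j * complex_of_real (cos (k * l j)))))
         = (\<Sum>j<N. complex_of_real k * B j)" by (intro sum.cong refl) (rule d, simp)
    then show ?thesis unfolding set using True by (simp add: sum_distrib_left mult.assoc)
  qed (simp add: set)
  have p2: "(\<forall>v. (\<Sum>j | j < N \<and> flower_o j = v. complex_of_real k * B j)
         + (\<Sum>j | j < N \<and> flower_t j = v.
              - (complex_of_real k * (- A j * complex_of_real (sin (k * l j))
                                      + B j * complex_of_real (cos (k * l j))))) = 0)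
       \<longleftrightarrow> (\<Sum>j<N. B j) = 0"
    unfolding e using k by auto
  show ?thesis unfolding std_cond_def p1 p2 ..
qed

lemma std_mandarin_iff:
  assumes k: "k > 0" and sym: "\<forall>j<N. coefC l k A B j = A j \<and> coefD l k A B j = B j"
  shows "std_cond N mandarin_o mandarin_t l k A B \<longleftrightarrow> (\<exists>a. \<forall>j<N. A j = a) \<and> (\<Sum>j<N. B j) = 0"
proof -
  have c: "A j * complex_of_real (cos (k * l j)) + B j * complex_of_real (sin (k * l j)) = A j" if "j < N" for j
    using sym that unfolding coefC_def by simp
  have d: "- (complex_of_real k * (- A j * complex_of_real (sin (k * l j)) + B j * complex_of_real (cos (k * l j))))
      = complex_of_real k * B j" if "j < N" for j
  proof -
    have "A j * complex_of_real (sin (k * l j)) - B j * complex_of_real (cos (k * l j)) = B j"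
      using sym that unfolding coefD_def by simp
    then show ?thesis by (simp add: algebra_simps)
  qed
  have p1: "(\<exists>F :: nat \<Rightarrow> complex. \<forall>j<N. A j = F (mandarin_o j) \<and>
         A j * complex_of_real (cos (k * l j)) + B j * complex_of_real (sin (k * l j)) = F (mandarin_t j))
     \<longleftrightarrow> (\<exists>a. \<forall>j<N. A j = a)"
  proof
    assume "\<exists>F :: nat \<Rightarrow> complex. \<forall>j<N. A j = F (mandarin_o j) \<and>
         A j * complex_of_real (cos (k * l j)) + B j * complex_of_real (sin (k * l j)) = F (mandarin_t j)"
    then show "\<exists>a. \<forall>j<N. A j = a" unfolding mandarin_o_def by blast
  next
    assume "\<exists>a. \<forall>j<N. A j = a"
    then obtain a where a: "\<forall>j<N. A j = a" by blast
    show "\<exists>F :: nat \<Rightarrow> complex. \<forall>j<N. A j = F (mandarin_o j) \<and>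
         A j * complex_of_real (cos (k * l j)) + B j * complex_of_real (sin (k * l j)) = F (mandarin_t j)"
      using a c by (intro exI[of _ "\<lambda>_. a"]) (simp add: mandarin_o_def mandarin_t_def)
  qed
  have set: "{j. j < N \<and> mandarin_o j = v} = (if v = 0 then {..<N} else {})"
     "{j. j < N \<and> mandarin_t j = v} = (if v = 1 then {..<N} else {})" for v
    unfolding mandarin_o_def mandarin_t_def by auto
  have e: "(\<Sum>j | j < N \<and> mandarin_o j = v. complex_of_real k * B j)
         + (\<Sum>j | j < N \<and> mandarin_t j = v.
              - (complex_of_real k * (- A j * complex_of_real (sin (k * l j))
                                      + B j * complex_of_real (cos (k * l j)))))
       = (if v = 0 \<or> v = 1 then complex_of_real k * (\<Sum>j<N. B j) else 0)" for v
  proof -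
    have "(\<Sum>j<N. - (complex_of_real k * (- A j * complex_of_real (sin (k * l j))
                                      + B j * complex_of_real (cos (k * l j)))))
         = (\<Sum>j<N. complex_of_real k * B j)" by (intro sum.cong refl) (rule d, simp)
    then show ?thesis unfolding set by (auto simp: sum_distrib_left)
  qed
  have p2: "(\<forall>v. (\<Sum>j | j < N \<and> mandarin_o j = v. complex_of_real k * B j)
         + (\<Sum>j | j < N \<and> mandarin_t j = v.
              - (complex_of_real k * (- A j * complex_of_real (sin (k * l j))
                                      + B j * complex_of_real (cos (k * l j))))) = 0)
       \<longleftrightarrow> (\<Sum>j<N. B j) = 0"
    unfolding e using k by auto
  show ?thesis unfolding std_cond_def p1 p2 ..
qed

lemma restr_PM: "P_mandarin_s N (restr N f) = P_mandarin_s N f"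
  unfolding P_mandarin_s_def restr_def
  by (intro sum.cong refl arg_cong2[where f="(*)"] prod.cong) auto

lemma T_transfer:
  assumes N: "N \<ge> 1"
  and iff1: "\<And>l k A B. k > 0 \<Longrightarrow> \<forall>j<N. coefC l k A B j = A j \<and> coefD l k A B j = B j \<Longrightarrow>
      std_cond N o1 t1 l k A B \<longleftrightarrow> (\<exists>a. \<forall>j<N. A j = a) \<and> (\<Sum>j<N. B j) = 0"
  and iff2: "\<And>l k A B. k > 0 \<Longrightarrow> \<forall>j<N. coefC l k A B j = A j \<and> coefD l k A B j = B j \<Longrightarrow>
      std_cond N o2 t2 l k A B \<longleftrightarrow> (\<exists>a. \<forall>j<N. A j = a) \<and> (\<Sum>j<N. B j) = 0"
  and x: "(z, A, B, A, B) \<in> Tset N o1 t1" and PM: "P_mandarin_s N z = 0"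
  shows "(z, A, B, A, B) \<in> Tset N o2 t2"
proof -
  from x consider (pos) l k A0 B0 where
      "(z, A, B, A, B) = (restr N (\<lambda>j. exp (\<i> * complex_of_real (k * l j))), tr N l k A0 B0)"
      "\<forall>j<N. l j > 0" "k > 0" "std_cond N o1 t1 l k A0 B0"
    | (zero) "(z, A, B, A, B) \<in> {(restr N (\<lambda>j. exp (\<i> * complex_of_real (0 * l j))),
        (restr N (\<lambda>_. c), restr N (\<lambda>_. 0), restr N (\<lambda>_. c), restr N (\<lambda>_. 0))) | l c.
        (\<forall>j<N. l j > 0)}"
    unfolding Tset_def by blast
  then show ?thesis
  proof cases
    case zero then show ?thesis unfolding Tset_def by (rule UnI2)
  next
    case pos
    have zdef: "z = restr N (\<lambda>j. exp (\<i> * complex_of_real (k * l j)))"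
      and tr: "(A, B, A, B) = tr N l k A0 B0" using pos(1) by auto
    have sym: "\<forall>j<N. coefC l k A0 B0 j = A0 j \<and> coefD l k A0 B0 j = B0 j"
    proof (intro allI impI)
      fix j assume j: "j < N"
      from tr have e: "restr N A0 = restr N (coefC l k A0 B0)" "restr N B0 = restr N (coefD l k A0 B0)"
        unfolding tr_def by auto
      have "restr N A0 j = restr N (coefC l k A0 B0) j" "restr N B0 j = restr N (coefD l k A0 B0) j"
        using e by simp_all
      then show "coefC l k A0 B0 j = A0 j \<and> coefD l k A0 B0 j = B0 j"
        using j unfolding restr_def by simp
    qed
    have phi: "(\<exists>a. \<forall>j<N. A0 j = a) \<and> (\<Sum>j<N. B0 j) = 0"
      using iff1[OF pos(3) sym] pos(4) by blast
    have std2: "std_cond N o2 t2 l k A0 B0" using iff2[OF pos(3) sym] phi by blast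
    have ex: "\<exists>A' B'. std_cond N o2 t2 l k A' B' \<and> (\<exists>j<N. A' j \<noteq> 0 \<or> B' j \<noteq> 0)"
    proof (cases "\<exists>j<N. A0 j \<noteq> 0 \<or> B0 j \<noteq> 0")
      case True with std2 show ?thesis by blast
    next
      case False
      have "P_mandarin_s N (\<lambda>j. exp (\<i> * complex_of_real (k * l j))) = 0"
        using PM unfolding zdef restr_PM .
      from exist_sym[OF N this] obtain A'' B'' where
        AB: "\<forall>j<N. coefC l k A'' B'' j = A'' j \<and> coefD l k A'' B'' j = B'' j"
          "(\<exists>a. \<forall>j<N. A'' j = a)" "(\<Sum>j<N. B'' j) = 0" "(\<exists>j<N. A'' j \<noteq> 0 \<or> B'' j \<noteq> 0)"
        by blast
      have "std_cond N o2 t2 l k A'' B''" using iff2[OF pos(3) AB(1)] AB(2,3) by blast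
      with AB(4) show ?thesis by blast
    qed
    show ?thesis unfolding Tset_def
      by (rule UnI1) (use pos(1-4) std2 ex in blast)
  qed
qed

theorem mainTheorem14:
  fixes N :: nat
  assumes "N \<ge> 1"
  shows "T_flower_sym N = T_mandarin_s N \<and>
         (\<exists>c :: complex. \<forall>z. P_flower_sym N z = c * P_mandarin_s N z)"
proof -
  have Ps: "P_flower_sym N = (\<lambda>z. - (1 / of_nat N) * P_mandarin_s N z)" by (rule Psym[OF assms])
  have N0: "of_nat N \<noteq> (0::complex)" using assms by simp
  have iffP: "P_flower_sym N z = 0 \<longleftrightarrow> P_mandarin_s N z = 0" for z using Ps N0 by simp
  note tf = T_transfer[OF assms std_flower_iff std_mandarin_iff]
  note tm = T_transfer[OF assms std_mandarin_iff std_flower_iff]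
  have "T_flower_sym N = T_mandarin_s N"
    unfolding T_flower_sym_def T_mandarin_s_def iffP
    by (auto intro: tf tm)
  moreover have "\<exists>c :: complex. \<forall>z. P_flower_sym N z = c * P_mandarin_s N z"
    by (intro exI[of _ "- (1 / of_nat N)"]) (simp add: Ps)
  ultimately show ?thesis by blast
qed

end
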